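(* Let $\epsilon\in\mathbb{R}$ and let $w$ be a basic solution of $\mathcal{L}_\epsilon$. Then $w(r,t)\neq 0$ for every $(r,t)\in(0,\infty)\times\mathbb{S}^1$.
   Context: Fix $a>0$, $b\in\mathbb{R}\setminus\{0\}$, $\nu\in[0,1)$, an integer $k\ge 2$ and $c\in C^k(\mathbb{S}^1,\mathbb{C})$ (functions on $\mathbb{S}^1$ are $2\pi$-periodic functions of $t\in\mathbb{R}$). For $\epsilon\in\mathbb{R}$ put $\lambda_\epsilon=a+ib\epsilon$, $L_\epsilon=\lambda_\epsilon\partial_t-ir\partial_r$ on $(0,\infty)\times\mathbb{S}^1$ (coordinates $(r,t)$), and $\mathcal{L}_\epsilon u=L_\epsilon u+i\lambda_\epsilon\nu u-c(t)\bar u$. A basic solution of $\mathcal{L}_\epsilon$ is a nontrivial solution $w$ of $\mathcal{L}_\epsilon w=0$ on $(0,\infty)\times\mathbb{S}^1$ of the form $w(r,t)=r^\sigma\phi(t)+\overline{r^\sigma\psi(t)}$, with $\sigma\in\mathbb{C}$ and $\phi,\psi$ $2\pi$-periodic $\mathbb{C}$-valued functions. *)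

theory Defs
  imports "HOL-Analysis.Analysis"
begin

text \<open>Functions on the circle S^1 are 2pi-periodic functions of t :: real.\<close>
definition periodic2pi :: "(real \<Rightarrow> 'a) \<Rightarrow> bool" where
  "periodic2pi f \<longleftrightarrow> (\<forall>t. f (t + 2 * pi) = f t)"

definition Ck_fun :: "nat \<Rightarrow> (real \<Rightarrow> complex) \<Rightarrow> bool" where
  "Ck_fun k f \<longleftrightarrow> (\<exists>D :: nat \<Rightarrow> real \<Rightarrow> complex. D 0 = f \<and>
     (\<forall>j<k. \<forall>t. (D j has_vector_derivative D (Suc j) t) (at t)) \<and>
     continuous_on UNIV (D k))"

definition lam :: "real \<Rightarrow> real \<Rightarrow> real \<Rightarrow> complex" where
  "lam a b \<epsilon> = complex_of_real a + \<i> * complex_of_real (b * \<epsilon>)"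

definition solves_Leps ::
  "real \<Rightarrow> real \<Rightarrow> real \<Rightarrow> real \<Rightarrow> (real \<Rightarrow> complex) \<Rightarrow> (real \<Rightarrow> real \<Rightarrow> complex) \<Rightarrow> bool" where
  "solves_Leps a b \<nu> \<epsilon> c w \<longleftrightarrow>
     (\<forall>r>0. \<forall>t. \<exists>Dt Dr.
        ((\<lambda>s. w r s) has_vector_derivative Dt) (at t) \<and>
        ((\<lambda>\<rho>. w \<rho> t) has_vector_derivative Dr) (at r) \<and>
        lam a b \<epsilon> * Dt - \<i> * complex_of_real r * Dr
          + \<i> * lam a b \<epsilon> * complex_of_real \<nu> * w r t - c t * cnj (w r t) = 0)"

definition basic_solution ::
  "real \<Rightarrow> real \<Rightarrow> real \<Rightarrow> real \<Rightarrow> (real \<Rightarrow> complex) \<Rightarrow> (real \<Rightarrow> real \<Rightarrow> complex) \<Rightarrow> bool" where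
  "basic_solution a b \<nu> \<epsilon> c w \<longleftrightarrow>
     solves_Leps a b \<nu> \<epsilon> c w \<and>
     (\<exists>r>0. \<exists>t. w r t \<noteq> 0) \<and>
     (\<exists>(\<sigma>::complex) (\<phi>::real \<Rightarrow> complex) (\<psi>::real \<Rightarrow> complex).
        periodic2pi \<phi> \<and> periodic2pi \<psi> \<and>
        (\<forall>r>0. \<forall>t. w r t = complex_of_real r powr \<sigma> * \<phi> t
                         + cnj (complex_of_real r powr \<sigma> * \<psi> t)))"

end

theory Submission
  imports Defs
begin

lemma nsq_deriv:
  assumes "(f has_vector_derivative f') (at t)"
  shows "((\<lambda>t. (cmod (f t))^2) has_real_derivative 2 * Re (cnj (f t) * f')) (at t)"
proof -
  have "((\<lambda>t. cnj (f t) * f t) has_vector_derivative (cnj (f t) * f' + cnj f' * f t)) (at t)"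
    by (intro derivative_intros assms)
  from bounded_linear.has_vector_derivative[OF bounded_linear_Re this]
  have "((\<lambda>t. Re (cnj (f t) * f t)) has_real_derivative Re (cnj (f t) * f' + cnj f' * f t)) (at t)"
    by (simp add: has_real_derivative_iff_has_vector_derivative)
  moreover have "(\<lambda>t. Re (cnj (f t) * f t)) = (\<lambda>t. (cmod (f t))^2)"
    by (rule ext) (simp add: cmod_def power2_eq_square)
  moreover have "Re (cnj (f t) * f' + cnj f' * f t) = 2 * Re (cnj (f t) * f')"
    by simp
  ultimately show ?thesis by (simp add: mult.commute)
qed

lemma powr_pos_eq: "r > 0 \<Longrightarrow> (complex_of_real r) powr \<sigma> = exp (\<sigma> * complex_of_real (ln r))"
  by (simp add: powr_def Ln_of_real)

lemma powr_vderiv: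
  assumes "r > 0"
  shows "((\<lambda>\<rho>. complex_of_real \<rho> powr \<sigma>) has_vector_derivative
           (\<sigma> / complex_of_real r) * complex_of_real r powr \<sigma>) (at r)"
proof -
  have d1: "((\<lambda>\<rho>. \<sigma> * complex_of_real (ln \<rho>)) has_vector_derivative \<sigma> * of_real (1/r)) (at r)"
    using assms by (intro derivative_intros) (auto intro!: derivative_eq_intros)
  have "((exp \<circ> (\<lambda>\<rho>. \<sigma> * complex_of_real (ln \<rho>))) has_vector_derivative
          (\<sigma> * of_real (1/r)) * exp (\<sigma> * complex_of_real (ln r))) (at r)"
    by (rule field_vector_diff_chain_at[OF d1]) (rule DERIV_exp)
  then have "((\<lambda>\<rho>. exp (\<sigma> * complex_of_real (ln \<rho>))) has_vector_derivative
          (\<sigma> / complex_of_real r) * complex_of_real r powr \<sigma>) (at r)"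
    using assms by (simp add: o_def powr_pos_eq divide_inverse)
  then show ?thesis
    by (rule has_vector_derivative_transform_within_open[where S="{0<..}"])
       (use assms in \<open>auto simp: powr_pos_eq\<close>)
qed

lemma per_nat: "periodic2pi f \<Longrightarrow> f (t + 2*pi*real m) = f t"
proof (induction m arbitrary: t)
  case (Suc m)
  have "f (t + 2*pi*real (Suc m)) = f ((t + 2*pi*real m) + 2*pi)"
    by (simp add: algebra_simps)
  also have "\<dots> = f (t + 2*pi*real m)" using Suc.prems by (simp add: periodic2pi_def)
  finally show ?case using Suc by simp
qed simp

lemma per_int: "periodic2pi f \<Longrightarrow> f (t + 2*pi*(of_int n)) = f t"
proof (cases "n \<ge> 0")
  case True
  assume p: "periodic2pi f"
  from True obtain m where "n = int m" using nonneg_int_cases by blast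
  then show ?thesis using per_nat[OF p] by simp
next
  case False
  assume p: "periodic2pi f"
  from False obtain m where m: "n = - int m" using nonneg_int_cases[of "-n"] by (metis add.inverse_inverse neg_0_le_iff_le linorder_not_le less_imp_le)
  have "f t = f ((t + 2*pi*(of_int n)) + 2*pi*real m)" using m by simp
  also have "\<dots> = f (t + 2*pi*(of_int n))" by (rule per_nat[OF p])
  finally show ?thesis by simp
qed

lemma reduce:
  assumes sol: "solves_Leps a b \<nu> \<epsilon> c w"
    and rep: "\<forall>r>0. \<forall>t. w r t = complex_of_real r powr \<sigma> * \<phi> t + cnj (complex_of_real r powr \<sigma> * \<psi> t)"
    and r: "r > 0"
  shows "\<exists>Dt. ((\<lambda>s. w r s) has_vector_derivative Dt) (at t) \<and>
     lam a b \<epsilon> * Dt - \<i> * (\<sigma> * complex_of_real r powr \<sigma> * \<phi> t + cnj (\<sigma> * complex_of_real r powr \<sigma> * \<psi> t))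
     + \<i> * lam a b \<epsilon> * complex_of_real \<nu> * w r t - c t * cnj (w r t) = 0"
proof -
  obtain Dt Dr where dt: "((\<lambda>s. w r s) has_vector_derivative Dt) (at t)"
    and dr: "((\<lambda>\<rho>. w \<rho> t) has_vector_derivative Dr) (at r)"
    and eq: "lam a b \<epsilon> * Dt - \<i> * complex_of_real r * Dr
          + \<i> * lam a b \<epsilon> * complex_of_real \<nu> * w r t - c t * cnj (w r t) = 0"
    using sol r unfolding solves_Leps_def by blast
  define E where "E = complex_of_real r powr \<sigma>"
  have g: "((\<lambda>\<rho>. complex_of_real \<rho> powr \<sigma> * \<phi> t + cnj (complex_of_real \<rho> powr \<sigma> * \<psi> t))
     has_vector_derivative ((\<sigma> / complex_of_real r) * E * \<phi> t + cnj ((\<sigma> / complex_of_real r) * E * \<psi> t))) (at r)"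
    unfolding E_def
    using has_vector_derivative_add[OF has_vector_derivative_mult_left[OF powr_vderiv[OF r]]
       has_vector_derivative_cnj[OF has_vector_derivative_mult_left[OF powr_vderiv[OF r]]]]
    by simp
  have g2: "((\<lambda>\<rho>. w \<rho> t)
     has_vector_derivative ((\<sigma> / complex_of_real r) * E * \<phi> t + cnj ((\<sigma> / complex_of_real r) * E * \<psi> t))) (at r)"
    by (rule has_vector_derivative_transform_within_open[OF g, where S="{0<..}"]) (use r rep in auto)
  have "Dr = (\<sigma> / complex_of_real r) * E * \<phi> t + cnj ((\<sigma> / complex_of_real r) * E * \<psi> t)"
    using vector_derivative_unique_at[OF dr g2] .
  then have "complex_of_real r * Dr = \<sigma> * E * \<phi> t + cnj (\<sigma> * E * \<psi> t)"
    using r by (simp add: field_simps)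
  then show ?thesis using dt eq unfolding E_def
    by (metis mult.assoc)
qed

lemma case_real:
  fixes L \<sigma> :: complex and \<nu> :: real
  assumes L: "L \<noteq> 0"
    and ud: "\<And>t. (u has_vector_derivative d t) (at t)"
    and eq: "\<And>t. L * d t = \<i>*\<sigma>*u t - \<i>*L* of_real \<nu>*u t + c t * cnj (u t)"
    and cc: "continuous_on UNIV c"
    and z: "u t0 = 0"
  shows "u t1 = 0"
proof -
  define I where "I = {min t0 t1 .. max t0 t1}"
  have "compact (c ` I)" unfolding I_def
    by (rule compact_continuous_image) (use cc continuous_on_subset in auto)
  then obtain B where B: "B > 0" "\<And>x. x \<in> I \<Longrightarrow> cmod (c x) \<le> B"
    using compact_imp_bounded bounded_pos by (metis image_eqI)
  define M where "M = cmod \<sigma> + cmod L * \<bar>\<nu>\<bar> + B"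
  define K where "K = 2 * M / cmod L"
  have K0: "K \<ge> 0" unfolding K_def M_def using B by auto
  define E where "E = (\<lambda>t. (cmod (u t))^2)"
  have Ed: "\<And>t. (E has_real_derivative 2 * Re (cnj (u t) * d t)) (at t)"
    unfolding E_def by (rule nsq_deriv[OF ud])
  have bnd: "\<bar>2 * Re (cnj (u t) * d t)\<bar> \<le> K * E t" if t: "t \<in> I" for t
  proof -
    have "cmod (d t) * cmod L = cmod (\<i>*\<sigma>*u t - \<i>*L* of_real \<nu>*u t + c t * cnj (u t))"
      using eq[of t] by (metis norm_mult mult.commute)
    also have "\<dots> \<le> cmod (\<i>*\<sigma>*u t) + cmod (\<i>*L* of_real \<nu>*u t) + cmod (c t * cnj (u t))"
      by (metis (no_types, lifting) add_mono norm_diff_ineq norm_triangle_ineq4 norm_triangle_le order_trans diff_conv_add_uminus norm_minus_cancel order_refl norm_triangle_ineq)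
    also have "\<dots> = cmod \<sigma> * cmod (u t) + cmod L * \<bar>\<nu>\<bar> * cmod (u t) + cmod (c t) * cmod (u t)"
      by (simp add: norm_mult)
    also have "\<dots> \<le> M * cmod (u t)"
      unfolding M_def using B(2)[OF t] by (simp add: algebra_simps mult_right_mono)
    finally have dd: "cmod (d t) \<le> M * cmod (u t) / cmod L"
      using L by (simp add: field_simps)
    have "\<bar>2 * Re (cnj (u t) * d t)\<bar> \<le> 2 * cmod (cnj (u t) * d t)"
      using abs_Re_le_cmod[of "cnj (u t) * d t"] by linarith
    also have "\<dots> = 2 * cmod (u t) * cmod (d t)" by (simp add: norm_mult)
    also have "\<dots> \<le> 2 * cmod (u t) * (M * cmod (u t) / cmod L)"
      using dd by (intro mult_left_mono) auto
    also have "\<dots> = K * E t" unfolding K_def E_def by (simp add: power2_eq_square)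
    finally show ?thesis .
  qed
  have E0: "E t0 = 0" unfolding E_def using z by simp
  have "E t1 \<le> 0"
  proof (cases "t0 \<le> t1")
    case True
    define F where "F = (\<lambda>t. E t * exp (- K * t))"
    have "F t1 \<le> F t0"
    proof (rule DERIV_nonpos_imp_nonincreasing[OF True])
      fix x assume x: "t0 \<le> x" "x \<le> t1"
      then have xI: "x \<in> I" unfolding I_def by auto
      have e: "((\<lambda>x. exp (- K * x)) has_real_derivative exp (- K * x) * (- K)) (at x)"
        by (auto intro!: derivative_eq_intros)
      have "(F has_real_derivative (2 * Re (cnj (u x) * d x)) * exp (- K * x) + E x * (exp (- K * x) * (- K))) (at x)"
        unfolding F_def using DERIV_mult[OF Ed[of x] e] by (simp add: algebra_simps)
      moreover have "(2 * Re (cnj (u x) * d x)) * exp (- K * x) + E x * (exp (- K * x) * (- K)) \<le> 0"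
      proof -
        have "2 * Re (cnj (u x) * d x) - K * E x \<le> 0" using bnd[OF xI] by linarith
        then have "(2 * Re (cnj (u x) * d x) - K * E x) * exp (- K * x) \<le> 0"
          by (simp add: mult_nonpos_nonneg)
        then show ?thesis by (simp add: algebra_simps)
      qed
      ultimately show "\<exists>y. DERIV F x :> y \<and> y \<le> 0" by blast
    qed
    then show ?thesis unfolding F_def using E0 by (simp add: mult_le_0_iff)
  next
    case False
    then have le: "t1 \<le> t0" by simp
    define F where "F = (\<lambda>t. E t * exp (K * t))"
    have "F t1 \<le> F t0"
    proof (rule DERIV_nonneg_imp_nondecreasing[OF le])
      fix x assume x: "t1 \<le> x" "x \<le> t0"
      then have xI: "x \<in> I" unfolding I_def by auto
      have e: "((\<lambda>x. exp (K * x)) has_real_derivative exp (K * x) * K) (at x)"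
        by (auto intro!: derivative_eq_intros)
      have "(F has_real_derivative (2 * Re (cnj (u x) * d x)) * exp (K * x) + E x * (exp (K * x) * K)) (at x)"
        unfolding F_def using DERIV_mult[OF Ed[of x] e] by (simp add: algebra_simps)
      moreover have "(2 * Re (cnj (u x) * d x)) * exp (K * x) + E x * (exp (K * x) * K) \<ge> 0"
      proof -
        have "2 * Re (cnj (u x) * d x) + K * E x \<ge> 0" using bnd[OF xI] by linarith
        then have "(2 * Re (cnj (u x) * d x) + K * E x) * exp (K * x) \<ge> 0"
          by simp
        then show ?thesis by (simp add: algebra_simps)
      qed
      ultimately show "\<exists>y. DERIV F x :> y \<and> y \<ge> 0" by blast
    qed
    then show ?thesis unfolding F_def using E0 by (simp add: mult_le_0_iff)
  qed
  then show ?thesis unfolding E_def by simp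
qed

lemma Re_mult_ofr: "Re (w * complex_of_real x) = Re w * x" by simp

lemma case_complex:
  fixes L \<sigma> :: complex and \<nu> :: real
  assumes L: "Re L > 0" and \<beta>: "Im \<sigma> \<noteq> 0"
   and \<phi>d: "\<And>t. (\<phi> has_vector_derivative p t) (at t)"
   and Xd: "\<And>t. (X has_vector_derivative q t) (at t)"
   and A: "\<And>t. L * p t = \<i>*\<sigma>*\<phi> t - \<i>*L* of_real \<nu>*\<phi> t + c t * cnj (X t)"
   and B: "\<And>t. L * q t = \<i>*cnj \<sigma>*X t - \<i>*L* of_real \<nu>*X t + c t * cnj (\<phi> t)"
   and p\<phi>: "periodic2pi \<phi>" and pX: "periodic2pi X"
   and z: "cmod (\<phi> t0) = cmod (X t0)"
   and t: "t0 - 2*pi < t" "t < t0 + 2*pi"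
  shows "\<phi> t = 0 \<and> X t = 0"
proof -
  have L0: "L \<noteq> 0" using L by auto
  define k1 where "k1 = 2 * Re (\<i>*\<sigma>/L)"
  define k2 where "k2 = 2 * Re (\<i>*cnj \<sigma>/L)"
  define \<kappa> where "\<kappa> = k1 - k2"
  have "\<kappa> = 2 * Re (\<i>*(\<sigma> - cnj \<sigma>)/L)"
    unfolding \<kappa>_def k1_def k2_def by (simp add: right_diff_distrib diff_divide_distrib)
  also have "\<sigma> - cnj \<sigma> = complex_of_real (2 * Im \<sigma>) * \<i>" by (rule complex_diff_cnj)
  finally have "\<kappa> = 2 * Re (\<i> * (complex_of_real (2 * Im \<sigma>) * \<i>) / L)" .
  also have "\<i> * (complex_of_real (2 * Im \<sigma>) * \<i>) = - complex_of_real (2 * Im \<sigma>)"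
    by (simp add: algebra_simps)
  finally have "\<kappa> = 2 * Re (- complex_of_real (2 * Im \<sigma>) / L)" .
  then have "\<kappa> = - 4 * Im \<sigma> * Re L / ((Re L)^2 + (Im L)^2)" by (simp add: Re_divide)
  moreover have "(Re L)^2 + (Im L)^2 > 0" using L by (simp add: add_pos_nonneg)
  ultimately have k0: "\<kappa> \<noteq> 0" using L \<beta> by simp
  define D where "D = (\<lambda>t. (cmod (\<phi> t))^2 - (cmod (X t))^2)"
  have Zeq: "cnj (\<phi> t) * p t - cnj (X t) * q t =
      (\<i>*\<sigma>/L) * (cnj (\<phi> t) * \<phi> t) - (\<i>*cnj \<sigma>/L) * (cnj (X t) * X t)
       - \<i> * of_real \<nu> * (cnj (\<phi> t) * \<phi> t - cnj (X t) * X t)" for t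
  proof -
    have p: "p t = (\<i>*\<sigma>*\<phi> t - \<i>*L* of_real \<nu>*\<phi> t + c t * cnj (X t)) / L"
      using A[of t] L0 by (simp add: field_simps)
    have q: "q t = (\<i>*cnj \<sigma>*X t - \<i>*L* of_real \<nu>*X t + c t * cnj (\<phi> t)) / L"
      using B[of t] L0 by (simp add: field_simps)
    show ?thesis unfolding p q using L0 by (simp add: field_simps)
  qed
  have ReZ: "2 * Re (cnj (\<phi> t) * p t) - 2 * Re (cnj (X t) * q t) = k1 * (cmod (\<phi> t))^2 - k2 * (cmod (X t))^2" for t
  proof -
    have n1: "cnj (\<phi> t) * \<phi> t = complex_of_real ((cmod (\<phi> t))^2)"
      using complex_norm_square[of "\<phi> t"] by (simp add: mult.commute)
    have n2: "cnj (X t) * X t = complex_of_real ((cmod (X t))^2)"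
      using complex_norm_square[of "X t"] by (simp add: mult.commute)
    have "2 * Re (cnj (\<phi> t) * p t) - 2 * Re (cnj (X t) * q t) = 2 * Re (cnj (\<phi> t) * p t - cnj (X t) * q t)"
      by simp
    also have "\<dots> = 2 * Re ((\<i>*\<sigma>/L) * complex_of_real ((cmod (\<phi> t))^2) - (\<i>*cnj \<sigma>/L) * complex_of_real ((cmod (X t))^2)
       - \<i> * of_real \<nu> * (complex_of_real ((cmod (\<phi> t))^2) - complex_of_real ((cmod (X t))^2)))"
      unfolding Zeq n1 n2 ..
    also have "\<dots> = k1 * (cmod (\<phi> t))^2 - k2 * (cmod (X t))^2"
    proof -
      have r0: "Re (\<i> * of_real \<nu> * (complex_of_real ((cmod (\<phi> t))^2) - complex_of_real ((cmod (X t))^2))) = 0"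
        by simp
      show ?thesis unfolding k1_def k2_def
        by (simp only: minus_complex.sel Re_mult_ofr r0) (simp add: algebra_simps)
    qed
    finally show ?thesis .
  qed
  have Dd: "(D has_real_derivative k1 * (cmod (\<phi> t))^2 - k2 * (cmod (X t))^2) (at t)" for t
    unfolding D_def ReZ[symmetric] by (intro DERIV_diff nsq_deriv \<phi>d Xd)
  define H where "H = (\<lambda>t. \<kappa> * D t * exp (- k1 * t))"
  have Hd: "(H has_real_derivative \<kappa>^2 * (cmod (X t))^2 * exp (- k1 * t)) (at t)" for t
  proof -
    have e: "((\<lambda>x. exp (- k1 * x)) has_real_derivative exp (- k1 * t) * (- k1)) (at t)"
      by (auto intro!: derivative_eq_intros)
    have "(H has_real_derivative \<kappa> * ((k1 * (cmod (\<phi> t))^2 - k2 * (cmod (X t))^2) * exp (- k1 * t) + exp (- k1 * t) * (- k1) * D t)) (at t)"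
      unfolding H_def using DERIV_cmult[OF DERIV_mult[OF Dd[of t] e], of \<kappa>] by (simp add: mult.assoc)
    moreover have "\<kappa> * ((k1 * (cmod (\<phi> t))^2 - k2 * (cmod (X t))^2) * exp (- k1 * t) + exp (- k1 * t) * (- k1) * D t)
       = \<kappa>^2 * (cmod (X t))^2 * exp (- k1 * t)"
      unfolding D_def \<kappa>_def by (simp add: algebra_simps power2_eq_square)
    ultimately show ?thesis by simp
  qed
  have Dper: "D (s + 2*pi) = D s" for s
    using p\<phi> pX unfolding D_def periodic2pi_def by simp
  have D0: "D t0 = 0" unfolding D_def using z by simp
  have Dm: "D (t0 - 2*pi) = 0" using Dper[of "t0 - 2*pi"] D0 by simp
  have Dp: "D (t0 + 2*pi) = 0" using Dper[of "t0"] D0 by simp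
  have Hmono: "H x \<le> H y" if "x \<le> y" for x y
  proof (rule DERIV_nonneg_imp_nondecreasing[OF that])
    fix s show "\<exists>y. DERIV H s :> y \<and> 0 \<le> y"
      using Hd[of s] by (intro exI[of _ "\<kappa>^2 * (cmod (X s))^2 * exp (- k1 * s)"] conjI) auto
  qed
  have Hz: "H s = 0" if "t0 - 2*pi \<le> s" "s \<le> t0 + 2*pi" for s
  proof -
    have "H (t0 - 2*pi) \<le> H s" "H s \<le> H (t0 + 2*pi)" using Hmono that by auto
    moreover have "H (t0 - 2*pi) = 0" "H (t0 + 2*pi) = 0" unfolding H_def using Dm Dp by auto
    ultimately show ?thesis by linarith
  qed
  define d where "d = min (t - (t0 - 2*pi)) (t0 + 2*pi - t)"
  have d0: "d > 0" using t unfolding d_def by auto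
  have "\<kappa>^2 * (cmod (X t))^2 * exp (- k1 * t) = 0"
  proof (rule DERIV_local_const[OF Hd d0], intro allI impI)
    fix y assume "\<bar>t - y\<bar> < d"
    then have "t0 - 2*pi \<le> y" "y \<le> t0 + 2*pi" unfolding d_def by auto
    then show "H t = H y" using Hz t by auto
  qed
  then have c0: "X t = 0" using k0 by simp
  have "H t = 0" using Hz t by auto
  then have "D t = 0" unfolding H_def using k0 by simp
  then have "\<phi> t = 0" unfolding D_def using c0 by simp
  then show ?thesis using c0 by simp
qed

theorem proposition2p1:
  fixes a b \<nu> \<epsilon> :: real and k :: nat and c :: "real \<Rightarrow> complex"
    and w :: "real \<Rightarrow> real \<Rightarrow> complex"
  assumes "a > 0" and "b \<noteq> 0" and "0 \<le> \<nu>" and "\<nu> < 1" and "k \<ge> 2"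
    and "periodic2pi c" and "Ck_fun k c"
    and "basic_solution a b \<nu> \<epsilon> c w"
  shows "\<forall>r>0. \<forall>t. w r t \<noteq> 0"
proof (intro allI impI notI)
  fix r0 t0 assume r0: "r0 > 0" and w0: "w r0 t0 = 0"
  have sol: "solves_Leps a b \<nu> \<epsilon> c w" using assms(8) unfolding basic_solution_def by blast
  obtain r1 t1 where r1: "r1 > 0" and w1: "w r1 t1 \<noteq> 0" using assms(8) unfolding basic_solution_def by blast
  obtain \<sigma> \<phi> \<psi> where p\<phi>: "periodic2pi \<phi>" and p\<psi>: "periodic2pi \<psi>"
    and rep: "\<forall>r>0. \<forall>t. w r t = complex_of_real r powr \<sigma> * \<phi> t + cnj (complex_of_real r powr \<sigma> * \<psi> t)"
    using assms(8) unfolding basic_solution_def by blast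
  define L where "L = lam a b \<epsilon>"
  have ReL: "Re L > 0" unfolding L_def lam_def using assms(1) by simp
  have L0: "L \<noteq> 0" using ReL by auto
  have hD: "\<exists>Dt. ((\<lambda>s. w r s) has_vector_derivative Dt) (at t) \<and>
     L * Dt - \<i> * (\<sigma> * complex_of_real r powr \<sigma> * \<phi> t + cnj (\<sigma> * complex_of_real r powr \<sigma> * \<psi> t))
     + \<i> * L * complex_of_real \<nu> * w r t - c t * cnj (w r t) = 0" if "r > 0" for r t
    unfolding L_def by (rule reduce[OF sol rep that])
  have cc: "continuous_on UNIV c"
  proof -
    obtain D :: "nat \<Rightarrow> real \<Rightarrow> complex" where D0: "D 0 = c"
      and Dd: "\<forall>j<k. \<forall>t. (D j has_vector_derivative D (Suc j) t) (at t)"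
      using assms(7) unfolding Ck_fun_def by blast
    have "\<And>t. (c has_vector_derivative D 1 t) (at t)" using Dd assms(5) D0 by auto
    then show ?thesis by (intro continuous_at_imp_continuous_on ballI has_vector_derivative_continuous) blast
  qed
  have Enz: "complex_of_real r powr \<sigma> \<noteq> 0" if "r > 0" for r
    using that by (simp add: powr_pos_eq)
  have E1: "complex_of_real 1 powr \<sigma> = 1" by (simp add: powr_pos_eq)
  obtain d1 where d1: "\<And>t. ((\<lambda>s. w 1 s) has_vector_derivative d1 t) (at t) \<and>
     L * d1 t - \<i> * (\<sigma> * complex_of_real 1 powr \<sigma> * \<phi> t + cnj (\<sigma> * complex_of_real 1 powr \<sigma> * \<psi> t))
     + \<i> * L * complex_of_real \<nu> * w 1 t - c t * cnj (w 1 t) = 0"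
    using hD[of 1] choice[of "\<lambda>t Dt. ((\<lambda>s. w 1 s) has_vector_derivative Dt) (at t) \<and>
     L * Dt - \<i> * (\<sigma> * complex_of_real 1 powr \<sigma> * \<phi> t + cnj (\<sigma> * complex_of_real 1 powr \<sigma> * \<psi> t))
     + \<i> * L * complex_of_real \<nu> * w 1 t - c t * cnj (w 1 t) = 0"] by auto
  have w1t: "w 1 t = \<phi> t + cnj (\<psi> t)" for t using rep E1 by simp
  show False
  proof (cases "Im \<sigma> = 0")
    case True
    define \<alpha> where "\<alpha> = Re \<sigma>"
    have s: "\<sigma> = complex_of_real \<alpha>" using True unfolding \<alpha>_def by (simp add: complex_eq_iff)
    define u where "u = (\<lambda>t. \<phi> t + cnj (\<psi> t))"
    have wr: "w r t = complex_of_real (exp (\<alpha> * ln r)) * u t" if "r > 0" for r t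
    proof -
      have "complex_of_real r powr \<sigma> = complex_of_real (exp (\<alpha> * ln r))"
        using that by (simp add: powr_pos_eq s exp_of_real[symmetric])
      then show ?thesis using rep that unfolding u_def by (simp add: algebra_simps)
    qed
    have ud: "(u has_vector_derivative d1 t) (at t)" for t
    proof -
      have "(\<lambda>s. w 1 s) = u" unfolding u_def using w1t by auto
      then show ?thesis using d1[of t] by simp
    qed
    have ueq: "L * d1 t = \<i>*\<sigma>*u t - \<i>*L* of_real \<nu>*u t + c t * cnj (u t)" for t
    proof -
      have e: "L * d1 t - \<i> * (\<sigma> * \<phi> t + cnj (\<sigma> * \<psi> t))
        + \<i> * L * complex_of_real \<nu> * u t - c t * cnj (u t) = 0"
        using d1[of t] E1 w1t[of t] unfolding u_def by simp
      have "cnj (\<sigma> * \<psi> t) = \<sigma> * cnj (\<psi> t)" using s by simp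
      then show ?thesis using e unfolding u_def by (simp add: algebra_simps)
    qed
    have "u t0 = 0" using wr[OF r0, of t0] w0 by simp
    then have "u t1 = 0" by (rule case_real[OF L0 ud ueq cc])
    then show False using wr[OF r1, of t1] w1 by simp
  next
    case False
    define \<beta> where "\<beta> = Im \<sigma>"
    define r2 where "r2 = exp (pi / (2 * \<beta>))"
    define \<rho> where "\<rho> = exp (Re \<sigma> * (pi / (2 * \<beta>)))"
    have r2: "r2 > 0" unfolding r2_def by simp
    have \<rho>0: "\<rho> > 0" unfolding \<rho>_def by simp
    have E2: "complex_of_real r2 powr \<sigma> = complex_of_real \<rho> * \<i>"
    proof -
      have "complex_of_real r2 powr \<sigma> = exp (\<sigma> * complex_of_real (pi / (2 * \<beta>)))"
        unfolding r2_def by (simp add: powr_pos_eq)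
      also have "\<dots> = complex_of_real \<rho> * cis (pi / 2)"
        unfolding exp_eq_polar \<rho>_def using False unfolding \<beta>_def by simp
      finally show ?thesis by simp
    qed
    obtain d2 where d2: "\<And>t. ((\<lambda>s. w r2 s) has_vector_derivative d2 t) (at t) \<and>
       L * d2 t - \<i> * (\<sigma> * complex_of_real r2 powr \<sigma> * \<phi> t + cnj (\<sigma> * complex_of_real r2 powr \<sigma> * \<psi> t))
       + \<i> * L * complex_of_real \<nu> * w r2 t - c t * cnj (w r2 t) = 0"
      using hD[OF r2] choice[of "\<lambda>t Dt. ((\<lambda>s. w r2 s) has_vector_derivative Dt) (at t) \<and>
       L * Dt - \<i> * (\<sigma> * complex_of_real r2 powr \<sigma> * \<phi> t + cnj (\<sigma> * complex_of_real r2 powr \<sigma> * \<psi> t))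
       + \<i> * L * complex_of_real \<nu> * w r2 t - c t * cnj (w r2 t) = 0"] by auto
    have w2t: "w r2 t = complex_of_real \<rho> * \<i> * \<phi> t - complex_of_real \<rho> * \<i> * cnj (\<psi> t)" for t
      using rep r2 E2 by simp
    define X where "X = (\<lambda>t. cnj (\<psi> t))"
    define m where "m = complex_of_real \<rho> * \<i>"
    have m0: "m \<noteq> 0" unfolding m_def using \<rho>0 by simp
    define p where "p = (\<lambda>t. (d1 t + d2 t / m) / 2)"
    define q where "q = (\<lambda>t. (d1 t - d2 t / m) / 2)"
    have cm: "cnj m = - m" unfolding m_def by simp
    have w2t': "w r2 t = m * \<phi> t - m * X t" for t
      using w2t[of t] unfolding m_def X_def by (simp add: algebra_simps)
    have w2m: "w r2 t / m = \<phi> t - X t" for t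
      using m0 unfolding w2t' by (simp add: right_diff_distrib[symmetric])
    have \<phi>eq: "\<phi> = (\<lambda>s. (w 1 s + w r2 s / m) / 2)"
    proof
      fix s show "\<phi> s = (w 1 s + w r2 s / m) / 2"
        unfolding w2m w1t X_def by (simp add: field_simps)
    qed
    have Xeq: "X = (\<lambda>s. (w 1 s - w r2 s / m) / 2)"
    proof
      fix s show "X s = (w 1 s - w r2 s / m) / 2"
        unfolding w2m w1t X_def by (simp add: field_simps)
    qed
    have \<phi>d: "(\<phi> has_vector_derivative p t) (at t)" for t
      unfolding \<phi>eq p_def using d1[of t] d2[of t] by (auto intro!: derivative_eq_intros)
    have Xd: "(X has_vector_derivative q t) (at t)" for t
      unfolding Xeq q_def using d1[of t] d2[of t] by (auto intro!: derivative_eq_intros)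
    have AB: "L * p t = \<i>*\<sigma>*\<phi> t - \<i>*L* of_real \<nu>*\<phi> t + c t * cnj (X t) \<and>
              L * q t = \<i>*cnj \<sigma>*X t - \<i>*L* of_real \<nu>*X t + c t * cnj (\<phi> t)" for t
    proof -
      define R1 where "R1 = \<i> * (\<sigma> * \<phi> t + cnj \<sigma> * X t) - \<i> * L * complex_of_real \<nu> * (\<phi> t + X t) + c t * (cnj (\<phi> t) + cnj (X t))"
      define S2 where "S2 = \<i> * (\<sigma> * \<phi> t - cnj \<sigma> * X t) - \<i> * L * complex_of_real \<nu> * (\<phi> t - X t) - c t * (cnj (\<phi> t) - cnj (X t))"
      have e1: "L * d1 t - \<i> * (\<sigma> * \<phi> t + cnj \<sigma> * X t)
        + \<i> * L * complex_of_real \<nu> * (\<phi> t + X t) - c t * (cnj (\<phi> t) + cnj (X t)) = 0"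
        using d1[of t] E1 w1t[of t] unfolding X_def by simp
      have Ld1: "L * d1 t = R1"
      proof -
        have "L * d1 t - R1 = L * d1 t - \<i> * (\<sigma> * \<phi> t + cnj \<sigma> * X t)
        + \<i> * L * complex_of_real \<nu> * (\<phi> t + X t) - c t * (cnj (\<phi> t) + cnj (X t))"
          unfolding R1_def by (simp add: algebra_simps)
        then show ?thesis using e1 by simp
      qed
      have e2raw: "L * d2 t - \<i> * (\<sigma> * m * \<phi> t + cnj (\<sigma> * m * \<psi> t))
         + \<i> * L * complex_of_real \<nu> * w r2 t - c t * cnj (w r2 t) = 0"
        using d2[of t] E2 unfolding m_def by simp
      have "L * d2 t - m * S2 = L * d2 t - \<i> * (\<sigma> * m * \<phi> t + cnj (\<sigma> * m * \<psi> t))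
         + \<i> * L * complex_of_real \<nu> * w r2 t - c t * cnj (w r2 t)"
        unfolding S2_def w2t' by (simp add: cm X_def algebra_simps)
      then have "L * d2 t - m * S2 = 0" using e2raw by (rule trans)
      then have Ld2: "L * d2 t = m * S2" by simp
      have "L * p t = (L * d1 t + (L * d2 t) / m) / 2" unfolding p_def using m0 by (simp add: field_simps)
      also have "\<dots> = (R1 + S2) / 2" unfolding Ld1 Ld2 using m0 by simp
      also have "\<dots> = \<i>*\<sigma>*\<phi> t - \<i>*L* of_real \<nu>*\<phi> t + c t * cnj (X t)"
        unfolding R1_def S2_def by (simp add: field_simps)
      finally have A: "L * p t = \<i>*\<sigma>*\<phi> t - \<i>*L* of_real \<nu>*\<phi> t + c t * cnj (X t)" .
      have "L * q t = (L * d1 t - (L * d2 t) / m) / 2" unfolding q_def using m0 by (simp add: field_simps)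
      also have "\<dots> = (R1 - S2) / 2" unfolding Ld1 Ld2 using m0 by simp
      also have "\<dots> = \<i>*cnj \<sigma>*X t - \<i>*L* of_real \<nu>*X t + c t * cnj (\<phi> t)"
        unfolding R1_def S2_def by (simp add: field_simps)
      finally show ?thesis using A by simp
    qed
    have pX: "periodic2pi X" using p\<psi> unfolding X_def periodic2pi_def by simp
    have z: "cmod (\<phi> t0) = cmod (X t0)"
    proof -
      define E where "E = complex_of_real r0 powr \<sigma>"
      have "E * \<phi> t0 = - cnj (E * \<psi> t0)" using rep r0 w0 unfolding E_def
        by (simp add: eq_neg_iff_add_eq_0)
      then have "cmod (E * \<phi> t0) = cmod (- cnj (E * \<psi> t0))" by (rule arg_cong)
      then have "cmod (E * \<phi> t0) = cmod (E * \<psi> t0)" by (simp only: norm_minus_cancel complex_mod_cnj)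
      then have "cmod E * cmod (\<phi> t0) = cmod E * cmod (\<psi> t0)" by (simp add: norm_mult)
      then show ?thesis using Enz[OF r0] unfolding E_def X_def by simp
    qed
    define n where "n = \<lfloor>(t0 - t1) / (2*pi)\<rfloor>"
    define t1' where "t1' = t1 + 2*pi*(of_int n)"
    have "of_int n \<le> (t0 - t1) / (2*pi)" "(t0 - t1) / (2*pi) < of_int n + 1"
      unfolding n_def by linarith+
    then have "2*pi* of_int n \<le> t0 - t1" "t0 - t1 < 2*pi* of_int n + 2*pi"
      by (simp_all add: field_simps)
    then have tt: "t0 - 2*pi < t1'" "t1' < t0 + 2*pi" unfolding t1'_def by (auto simp: algebra_simps)
    have "\<phi> t1' = 0 \<and> X t1' = 0"
      by (rule case_complex[OF ReL False \<phi>d Xd _ _ p\<phi> pX z tt]) (use AB in blast)+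
    then have "\<phi> t1 = 0" "\<psi> t1 = 0"
      using per_int[OF p\<phi>, of t1 n] per_int[OF pX, of t1 n] unfolding t1'_def X_def by auto
    then show False using rep r1 w1 by simp
  qed
qed

end
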